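(* The class of trivial extensions is Morita invariant: if $A/B$ is a trivial extension and $A/B$ is Morita equivalent to $A'/B'$, then $A'/B'$ is a trivial extension.
   Context: All rings have identity, subrings contain the identity, modules are unital; a ring extension $A/B$ means $B$ is a subring of $A$. $A/B$ is a trivial extension if there is a $B$-$B$-bimodule $S$ with $A=B\oplus S$ and multiplication $(b,s)(c,t)=(bc,bt+sc)$. For bimodules ${}_AX_{A'}$, ${}_AY_{A'}$, write $X\mid Y$ if $X$ is isomorphic to a direct summand of a finite direct sum of copies of $Y$, and $X\sim Y$ if $X\mid Y$ and $Y\mid X$. $\mathrm{End}^r({}_AM)$ denotes the ring of left $A$-endomorphisms of $M$ acting on the right. A bimodule ${}_AM_{A'}$ is a Morita module if ${}_AM\sim{}_AA$ and $\mathrm{End}^r({}_AM)=A'$. Ring extensions $A/B$ and $A'/B'$ are Morita equivalent if there exist Morita modules ${}_AM_{A'}$ and ${}_BN_{B'}$ with ${}_AA\otimes_BN_{B'}\cong{}_AM_{B'}$. A class $\mathscr C$ of ring extensions is Morita invariant if whenever $A/B\in\mathscr C$ and $A/B$ is Morita equivalent to $A'/B'$, then $A'/B'\in\mathscr C$. *)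

theory Defs
  imports Main "HOL-Library.Poly_Mapping"
begin

text \<open>Rings are types of class ring_1 (the whole type is the ring);
  a ring extension A/B is a type 'a :: ring_1 (= A) together with a subring B :: 'a set.\<close>

definition subring_of :: "'a::ring_1 set \<Rightarrow> bool" where
  "subring_of B \<longleftrightarrow> 0 \<in> B \<and> 1 \<in> B \<and>
     (\<forall>x\<in>B. \<forall>y\<in>B. x + y \<in> B \<and> x * y \<in> B) \<and> (\<forall>x\<in>B. - x \<in> B)"

definition add_subgroup :: "'m::ab_group_add set \<Rightarrow> bool" where
  "add_subgroup C \<longleftrightarrow> 0 \<in> C \<and> (\<forall>x\<in>C. \<forall>y\<in>C. x + y \<in> C) \<and> (\<forall>x\<in>C. - x \<in> C)"

definition lmod :: "'r::ring_1 set \<Rightarrow> 'm::ab_group_add set \<Rightarrow> ('r \<Rightarrow> 'm \<Rightarrow> 'm) \<Rightarrow> bool" where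
  "lmod R C l \<longleftrightarrow> add_subgroup C \<and>
     (\<forall>r\<in>R. \<forall>x\<in>C. l r x \<in> C) \<and>
     (\<forall>r\<in>R. \<forall>x\<in>C. \<forall>y\<in>C. l r (x + y) = l r x + l r y) \<and>
     (\<forall>r\<in>R. \<forall>s\<in>R. \<forall>x\<in>C. l (r + s) x = l r x + l s x) \<and>
     (\<forall>r\<in>R. \<forall>s\<in>R. \<forall>x\<in>C. l (r * s) x = l r (l s x)) \<and>
     (\<forall>x\<in>C. l 1 x = x)"

definition rmod :: "'s::ring_1 set \<Rightarrow> 'm::ab_group_add set \<Rightarrow> ('m \<Rightarrow> 's \<Rightarrow> 'm) \<Rightarrow> bool" where
  "rmod S C rr \<longleftrightarrow> add_subgroup C \<and>
     (\<forall>r\<in>S. \<forall>x\<in>C. rr x r \<in> C) \<and>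
     (\<forall>r\<in>S. \<forall>x\<in>C. \<forall>y\<in>C. rr (x + y) r = rr x r + rr y r) \<and>
     (\<forall>r\<in>S. \<forall>s\<in>S. \<forall>x\<in>C. rr x (r + s) = rr x r + rr x s) \<and>
     (\<forall>r\<in>S. \<forall>s\<in>S. \<forall>x\<in>C. rr x (r * s) = rr (rr x r) s) \<and>
     (\<forall>x\<in>C. rr x 1 = x)"

definition bimod :: "'r::ring_1 set \<Rightarrow> 's::ring_1 set \<Rightarrow> 'm::ab_group_add set \<Rightarrow>
    ('r \<Rightarrow> 'm \<Rightarrow> 'm) \<Rightarrow> ('m \<Rightarrow> 's \<Rightarrow> 'm) \<Rightarrow> bool" where
  "bimod R S C l rr \<longleftrightarrow> lmod R C l \<and> rmod S C rr \<and>
     (\<forall>a\<in>R. \<forall>b\<in>S. \<forall>x\<in>C. l a (rr x b) = rr (l a x) b)"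

definition llin :: "'r::ring_1 set \<Rightarrow> 'm::ab_group_add set \<Rightarrow> ('r \<Rightarrow> 'm \<Rightarrow> 'm) \<Rightarrow>
    'n::ab_group_add set \<Rightarrow> ('r \<Rightarrow> 'n \<Rightarrow> 'n) \<Rightarrow> ('m \<Rightarrow> 'n) \<Rightarrow> bool" where
  "llin R C l D l' f \<longleftrightarrow> (\<forall>x\<in>C. f x \<in> D) \<and>
     (\<forall>x\<in>C. \<forall>y\<in>C. f (x + y) = f x + f y) \<and>
     (\<forall>a\<in>R. \<forall>x\<in>C. f (l a x) = l' a (f x))"

text \<open>X | Y for left R-modules: X is isomorphic to a direct summand of Y^n for some n,
  i.e. there are module maps i : X \<rightarrow> Y^n (components f k) and p : Y^n \<rightarrow> X
  (p = sum of components g k) with p \<circ> i = id.\<close>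
definition ldvd :: "'r::ring_1 set \<Rightarrow> 'm::ab_group_add set \<Rightarrow> ('r \<Rightarrow> 'm \<Rightarrow> 'm) \<Rightarrow>
    'n::ab_group_add set \<Rightarrow> ('r \<Rightarrow> 'n \<Rightarrow> 'n) \<Rightarrow> bool" where
  "ldvd R C l D l' \<longleftrightarrow> (\<exists>(n::nat) f g.
     (\<forall>k<n. llin R C l D l' (f k) \<and> llin R D l' C l (g k)) \<and>
     (\<forall>x\<in>C. (\<Sum>k<n. g k (f k x)) = x))"

definition lsim :: "'r::ring_1 set \<Rightarrow> 'm::ab_group_add set \<Rightarrow> ('r \<Rightarrow> 'm \<Rightarrow> 'm) \<Rightarrow>
    'n::ab_group_add set \<Rightarrow> ('r \<Rightarrow> 'n \<Rightarrow> 'n) \<Rightarrow> bool" where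
  "lsim R C l D l' \<longleftrightarrow> ldvd R C l D l' \<and> ldvd R D l' C l"

text \<open>Morita module {}_R M_{R'}: bimodule with {}_R M \<sim> {}_R R and End^r({}_R M) = R',
  i.e. every left R-endomorphism of M is right multiplication by a unique element of R'.\<close>
definition morita_module :: "'r::ring_1 set \<Rightarrow> 's::ring_1 set \<Rightarrow> 'm::ab_group_add set \<Rightarrow>
    ('r \<Rightarrow> 'm \<Rightarrow> 'm) \<Rightarrow> ('m \<Rightarrow> 's \<Rightarrow> 'm) \<Rightarrow> bool" where
  "morita_module R R' C l rr \<longleftrightarrow> bimod R R' C l rr \<and>
     lsim R C l R (\<lambda>a x. a * x) \<and>
     (\<forall>f. llin R C l C l f \<longrightarrow> (\<exists>!a'. a' \<in> R' \<and> (\<forall>x\<in>C. f x = rr x a')))"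

definition zsc :: "int \<Rightarrow> 'm::ab_group_add \<Rightarrow> 'm" where
  "zsc k x = (if 0 \<le> k then (\<Sum>i<nat k. x) else - (\<Sum>i<nat (- k). x))"

text \<open>The subgroup of the free abelian group on A \<times> N generated by the defining
  relations of the tensor product A \<otimes>_B N.\<close>
inductive_set tensor_rels :: "'a::ring_1 set \<Rightarrow> 'n::ab_group_add set \<Rightarrow> ('a \<Rightarrow> 'n \<Rightarrow> 'n)
    \<Rightarrow> (('a \<times> 'n) \<Rightarrow>\<^sub>0 int) set" for B CN lN where
  zero: "0 \<in> tensor_rels B CN lN"
| add: "c \<in> tensor_rels B CN lN \<Longrightarrow> d \<in> tensor_rels B CN lN \<Longrightarrow> c + d \<in> tensor_rels B CN lN"
| neg: "c \<in> tensor_rels B CN lN \<Longrightarrow> - c \<in> tensor_rels B CN lN"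
| rel1: "n \<in> CN \<Longrightarrow> Poly_Mapping.single (x + y, n) 1 - Poly_Mapping.single (x, n) 1
          - Poly_Mapping.single (y, n) 1 \<in> tensor_rels B CN lN"
| rel2: "n \<in> CN \<Longrightarrow> n' \<in> CN \<Longrightarrow> Poly_Mapping.single (x, n + n') 1 - Poly_Mapping.single (x, n) 1
          - Poly_Mapping.single (x, n') 1 \<in> tensor_rels B CN lN"
| rel3: "b \<in> B \<Longrightarrow> n \<in> CN \<Longrightarrow> Poly_Mapping.single (x * b, n) 1
          - Poly_Mapping.single (x, lN b n) 1 \<in> tensor_rels B CN lN"

definition tensor_ind :: "('a \<Rightarrow> 'n \<Rightarrow> 'm::ab_group_add) \<Rightarrow> (('a \<times> 'n) \<Rightarrow>\<^sub>0 int) \<Rightarrow> 'm" where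
  "tensor_ind \<phi> c = (\<Sum>p\<in>Poly_Mapping.keys c. zsc (Poly_Mapping.lookup c p) (\<phi> (fst p) (snd p)))"

text \<open>{}_A A \<otimes>_B N_{B'} \<cong> {}_A M_{B'} as A-B'-bimodules (A = UNIV :: 'a set):
  there is a map \<phi>(x,n) = image of x \<otimes> n, compatible with the A- and B'-actions, whose
  induced map from the free abelian group on A \<times> N is onto M with kernel exactly
  the tensor relations.\<close>
definition tensor_iso :: "'a::ring_1 set \<Rightarrow> 'n::ab_group_add set \<Rightarrow> ('a \<Rightarrow> 'n \<Rightarrow> 'n) \<Rightarrow>
    ('n \<Rightarrow> 'c::ring_1 \<Rightarrow> 'n) \<Rightarrow> 'c set \<Rightarrow>
    'm::ab_group_add set \<Rightarrow> ('a \<Rightarrow> 'm \<Rightarrow> 'm) \<Rightarrow> ('m \<Rightarrow> 'c \<Rightarrow> 'm) \<Rightarrow> bool" where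
  "tensor_iso B CN lN rN B' CM lM rM \<longleftrightarrow> (\<exists>\<phi> :: 'a \<Rightarrow> 'n \<Rightarrow> 'm.
     (\<forall>x. \<forall>n\<in>CN. \<phi> x n \<in> CM) \<and>
     (\<forall>x y. \<forall>n\<in>CN. \<phi> (x + y) n = \<phi> x n + \<phi> y n) \<and>
     (\<forall>x. \<forall>n\<in>CN. \<forall>n'\<in>CN. \<phi> x (n + n') = \<phi> x n + \<phi> x n') \<and>
     (\<forall>x. \<forall>b\<in>B. \<forall>n\<in>CN. \<phi> (x * b) n = \<phi> x (lN b n)) \<and>
     (\<forall>a x. \<forall>n\<in>CN. \<phi> (a * x) n = lM a (\<phi> x n)) \<and>
     (\<forall>x. \<forall>n\<in>CN. \<forall>b'\<in>B'. \<phi> x (rN n b') = rM (\<phi> x n) b') \<and>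
     (\<forall>m\<in>CM. \<exists>c. Poly_Mapping.keys c \<subseteq> UNIV \<times> CN \<and> tensor_ind \<phi> c = m) \<and>
     (\<forall>c. Poly_Mapping.keys c \<subseteq> UNIV \<times> CN \<and> tensor_ind \<phi> c = 0 \<longrightarrow> c \<in> tensor_rels B CN lN))"

text \<open>Morita equivalence of ring extensions A/B (A = UNIV :: 'a set) and A'/B'
  (A' = UNIV :: 'c set) witnessed by Morita modules {}_A M_{A'} (carrier CM) and
  {}_B N_{B'} (carrier CN).\<close>
definition morita_equiv_via :: "'a::ring_1 set \<Rightarrow> 'c::ring_1 set \<Rightarrow>
    'm::ab_group_add set \<Rightarrow> ('a \<Rightarrow> 'm \<Rightarrow> 'm) \<Rightarrow> ('m \<Rightarrow> 'c \<Rightarrow> 'm) \<Rightarrow>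
    'n::ab_group_add set \<Rightarrow> ('a \<Rightarrow> 'n \<Rightarrow> 'n) \<Rightarrow> ('n \<Rightarrow> 'c \<Rightarrow> 'n) \<Rightarrow> bool" where
  "morita_equiv_via B B' CM lM rM CN lN rN \<longleftrightarrow>
     subring_of B \<and> subring_of B' \<and>
     morita_module (UNIV :: 'a set) (UNIV :: 'c set) CM lM rM \<and>
     morita_module B B' CN lN rN \<and>
     tensor_iso B CN lN rN B' CM lM rM"

text \<open>Trivial extension A/B (A = UNIV :: 'a set): A = B \<oplus> S for a B-B-sub-bimodule S
  of A with S S = 0, so that (b + s)(c + t) = bc + (bt + sc).\<close>
definition trivial_ext :: "'a::ring_1 set \<Rightarrow> bool" where
  "trivial_ext B \<longleftrightarrow> subring_of B \<and> (\<exists>S. add_subgroup S \<and>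
     (\<forall>b\<in>B. \<forall>s\<in>S. b * s \<in> S \<and> s * b \<in> S) \<and>
     (\<forall>s\<in>S. \<forall>t\<in>S. s * t = 0) \<and>
     B \<inter> S = {0} \<and> (\<forall>a. \<exists>b\<in>B. \<exists>s\<in>S. a = b + s))"

end

theory Submission imports Defs begin

lemma zsc_0[simp]: "zsc 0 x = 0" by (simp add: zsc_def)
lemma zsc_zero[simp]: "zsc k 0 = 0" by (simp add: zsc_def)

lemma zsc_succ: "zsc (k + 1) x = zsc k x + x"
proof (cases "k \<ge> 0")
  case True
  then have "nat (k+1) = Suc (nat k)" by simp
  then show ?thesis using True by (simp add: zsc_def)
next
  case False
  show ?thesis
  proof (cases "k = -1")
    case True then show ?thesis by (simp add: zsc_def)
  next
    case False2: False
    with False have "nat (- k) = Suc (nat (-(k+1)))" by simp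
    then show ?thesis using False False2 by (simp add: zsc_def)
  qed
qed

lemma zsc_add: "zsc (k + l) x = zsc k x + zsc l x"
proof (induction l rule: int_induct[where k=0])
  case base then show ?case by simp
next
  case (step1 i)
  have "zsc (k + (i+1)) x = zsc (k+i) x + x" using zsc_succ[of "k+i"] by (simp add: add.assoc)
  then show ?case using step1 zsc_succ[of i x] by (simp add: add.assoc)
next
  case (step2 i)
  have a: "zsc (k + i) x = zsc (k + (i - 1)) x + x" using zsc_succ[of "k+(i-1)"] by simp
  have b: "zsc i x = zsc (i - 1) x + x" using zsc_succ[of "i-1"] by simp
  from step2 a b show ?case by (simp add: algebra_simps)
qed

lemma zsc_neg: "zsc (- k) x = - zsc k x"
  using zsc_add[of k "-k" x] by (simp add: eq_neg_iff_add_eq_0 add.commute)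

lemma zsc_plus: "zsc k (x + y) = zsc k x + zsc k y"
  by (simp add: zsc_def sum.distrib)

lemma zsc_uminus: "zsc k (- x) = - zsc k x"
  by (simp add: zsc_def sum_negf)

lemma zsc_minus: "zsc k (x - y) = zsc k x - zsc k y"
  by (simp only: diff_conv_add_uminus zsc_plus zsc_uminus)

lemma zsc_1[simp]: "zsc 1 x = x" by (simp add: zsc_def)

definition addhom :: "'m::ab_group_add set \<Rightarrow> ('m \<Rightarrow> 'n::ab_group_add) \<Rightarrow> bool" where
  "addhom C f \<longleftrightarrow> (\<forall>x\<in>C. \<forall>y\<in>C. f (x + y) = f x + f y)"

lemma addhom_0: "add_subgroup C \<Longrightarrow> addhom C f \<Longrightarrow> f 0 = 0"
  unfolding addhom_def add_subgroup_def by (metis add_cancel_right_right add_0)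

lemma addhom_neg: "add_subgroup C \<Longrightarrow> addhom C f \<Longrightarrow> x \<in> C \<Longrightarrow> f (- x) = - f x"
  using addhom_0[of C f] unfolding addhom_def add_subgroup_def
  by (metis add.right_inverse add_eq_0_iff)

lemma sub_sum_mem: "add_subgroup C \<Longrightarrow> (\<And>i. i \<in> I \<Longrightarrow> g i \<in> C) \<Longrightarrow> sum g I \<in> C"
  unfolding add_subgroup_def
  by (induction I rule: infinite_finite_induct) auto

lemma zsc_mem: "add_subgroup C \<Longrightarrow> x \<in> C \<Longrightarrow> zsc k x \<in> C"
proof -
  assume a: "add_subgroup C" "x \<in> C"
  have "(\<Sum>i<m. x) \<in> C" for m :: nat using sub_sum_mem[OF a(1), of "{..<m}" "\<lambda>_. x"] a by auto
  then show ?thesis using a unfolding zsc_def add_subgroup_def by auto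
qed

lemma addhom_sum: "add_subgroup C \<Longrightarrow> addhom C f \<Longrightarrow> (\<And>i. i \<in> I \<Longrightarrow> g i \<in> C)
   \<Longrightarrow> f (sum g I) = (\<Sum>i\<in>I. f (g i))"
proof (induction I rule: infinite_finite_induct)
  case (infinite A) then show ?case using addhom_0 by auto
next
  case empty then show ?case using addhom_0 by auto
next
  case (insert x F)
  have "sum g F \<in> C" using insert sub_sum_mem[of C F g] by auto
  then show ?case using insert unfolding addhom_def by auto
qed

lemma zsc_hom: "add_subgroup C \<Longrightarrow> addhom C f \<Longrightarrow> x \<in> C \<Longrightarrow> f (zsc k x) = zsc k (f x)"
proof -
  assume a: "add_subgroup C" "addhom C f" "x \<in> C"
  have s: "f (\<Sum>i<m. x) = (\<Sum>i<m. f x)" "(\<Sum>i<m. x) \<in> C" for m :: nat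
    using addhom_sum[OF a(1,2), of "{..<m}" "\<lambda>_. x"] sub_sum_mem[OF a(1), of "{..<m}" "\<lambda>_. x"] a(3)
    by (auto simp del: sum_constant)
  show ?thesis unfolding zsc_def using s addhom_neg[OF a(1,2) s(2)]
    by (auto simp del: sum_constant)
qed

lemma ti_superset:
  assumes "finite K" "Poly_Mapping.keys c \<subseteq> K"
  shows "tensor_ind \<chi> c = (\<Sum>p\<in>K. zsc (Poly_Mapping.lookup c p) (\<chi> (fst p) (snd p)))"
  unfolding tensor_ind_def
  by (rule sum.mono_neutral_left) (use assms in \<open>auto simp: in_keys_iff\<close>)

lemma ti_add: "tensor_ind \<chi> (c + d) = tensor_ind \<chi> c + tensor_ind \<chi> d"
proof -
  let ?K = "Poly_Mapping.keys c \<union> Poly_Mapping.keys d"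
  have "tensor_ind \<chi> (c + d) = (\<Sum>p\<in>?K. zsc (Poly_Mapping.lookup (c+d) p) (\<chi> (fst p) (snd p)))"
    by (rule ti_superset) (use keys_add[of c d] in auto)
  also have "\<dots> = (\<Sum>p\<in>?K. zsc (Poly_Mapping.lookup c p) (\<chi> (fst p) (snd p))) + (\<Sum>p\<in>?K. zsc (Poly_Mapping.lookup d p) (\<chi> (fst p) (snd p)))"
    by (simp add: lookup_add zsc_add sum.distrib)
  also have "\<dots> = tensor_ind \<chi> c + tensor_ind \<chi> d"
    using ti_superset[of ?K c \<chi>] ti_superset[of ?K d \<chi>] by simp
  finally show ?thesis .
qed

lemma ti_zero[simp]: "tensor_ind \<chi> 0 = 0" by (simp add: tensor_ind_def)

lemma keys_uminus': "Poly_Mapping.keys (- c) = Poly_Mapping.keys (c :: 'x \<Rightarrow>\<^sub>0 int)"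
  by (auto simp: in_keys_iff)

lemma ti_neg: "tensor_ind \<chi> (- c) = - tensor_ind \<chi> c"
  unfolding tensor_ind_def keys_uminus' by (simp add: zsc_neg sum_negf)

lemma ti_diff: "tensor_ind \<chi> (c - d) = tensor_ind \<chi> c - tensor_ind \<chi> d"
  by (simp only: diff_conv_add_uminus ti_add ti_neg)

lemma ti_single[simp]: "tensor_ind \<chi> (Poly_Mapping.single p k) = zsc k (\<chi> (fst p) (snd p))"
  by (simp add: tensor_ind_def)

lemma ti_cong: "(\<And>x n. (x, n) \<in> Poly_Mapping.keys c \<Longrightarrow> \<chi>1 x n = \<chi>2 x n) \<Longrightarrow> tensor_ind \<chi>1 c = tensor_ind \<chi>2 c"
  unfolding tensor_ind_def by (rule sum.cong) auto

lemma ti_mem: "add_subgroup C \<Longrightarrow> (\<And>x n. (x, n) \<in> Poly_Mapping.keys c \<Longrightarrow> \<chi> x n \<in> C) \<Longrightarrow> tensor_ind \<chi> c \<in> C"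
  unfolding tensor_ind_def by (rule sub_sum_mem) (auto intro: zsc_mem)

lemma ti_hom: "add_subgroup C \<Longrightarrow> addhom C f \<Longrightarrow> (\<And>x n. (x, n) \<in> Poly_Mapping.keys c \<Longrightarrow> \<chi> x n \<in> C)
  \<Longrightarrow> f (tensor_ind \<chi> c) = tensor_ind (\<lambda>x n. f (\<chi> x n)) c"
  unfolding tensor_ind_def
  by (subst addhom_sum[where C=C]) (auto intro: zsc_mem simp: zsc_hom)

lemma ti_fdiff: "tensor_ind (\<lambda>x n. \<chi>1 x n - \<chi>2 x n) c = tensor_ind \<chi>1 c - tensor_ind \<chi>2 c"
  unfolding tensor_ind_def by (simp add: zsc_minus sum_subtractf)

lemma ti_sum: "tensor_ind \<chi> (\<Sum>i\<in>I. c i) = (\<Sum>i\<in>I. tensor_ind \<chi> (c i))"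
  by (induction I rule: infinite_finite_induct) (auto simp: ti_add)

definition relab :: "('a \<times> 'n \<Rightarrow> 'a \<times> 'n) \<Rightarrow> ('a \<times> 'n \<Rightarrow>\<^sub>0 int) \<Rightarrow> ('a \<times> 'n \<Rightarrow>\<^sub>0 int)" where
  "relab h c = (\<Sum>p\<in>Poly_Mapping.keys c. Poly_Mapping.single (h p) (Poly_Mapping.lookup c p))"

lemma ti_relab: "tensor_ind \<chi> (relab h c) = tensor_ind (\<lambda>x n. \<chi> (fst (h (x, n))) (snd (h (x, n)))) c"
  unfolding relab_def ti_sum ti_single by (simp add: tensor_ind_def)

lemma keys_sum_sub: "Poly_Mapping.keys (\<Sum>i\<in>I. (c i :: 'x \<Rightarrow>\<^sub>0 int)) \<subseteq> (\<Union>i\<in>I. Poly_Mapping.keys (c i))"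
proof (induction I rule: infinite_finite_induct)
  case (insert x F)
  then show ?case using keys_add[of "c x" "sum c F"] by auto
qed auto

lemma keys_relab: "Poly_Mapping.keys (relab h c) \<subseteq> h ` Poly_Mapping.keys c"
  unfolding relab_def using keys_sum_sub[of "\<lambda>p. Poly_Mapping.single (h p) (Poly_Mapping.lookup c p)" "Poly_Mapping.keys c"]
  by (auto split: if_splits)


locale tsetup =
  fixes B :: "'a::ring_1 set" and S :: "'a set" and B' :: "'c::ring_1 set"
    and CM :: "'m::ab_group_add set" and lM :: "'a \<Rightarrow> 'm \<Rightarrow> 'm" and rM :: "'m \<Rightarrow> 'c \<Rightarrow> 'm"
    and CN :: "'n::ab_group_add set" and lN :: "'a \<Rightarrow> 'n \<Rightarrow> 'n" and rN :: "'n \<Rightarrow> 'c \<Rightarrow> 'n"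
    and \<phi> :: "'a \<Rightarrow> 'n \<Rightarrow> 'm"
  assumes subB: "subring_of B" and subB': "subring_of B'"
    and Ssub: "add_subgroup S" and BS: "\<forall>b\<in>B. \<forall>s\<in>S. b * s \<in> S \<and> s * b \<in> S"
    and SS: "\<forall>s\<in>S. \<forall>t\<in>S. s * t = 0" and BiS: "B \<inter> S = {0}" and dec: "\<forall>a. \<exists>b\<in>B. \<exists>s\<in>S. a = b + s"
    and MM: "morita_module (UNIV :: 'a set) (UNIV :: 'c set) CM lM rM"
    and MN: "morita_module B B' CN lN rN"
    and p1: "\<forall>x. \<forall>n\<in>CN. \<phi> x n \<in> CM"
    and p2: "\<forall>x y. \<forall>n\<in>CN. \<phi> (x + y) n = \<phi> x n + \<phi> y n"
    and p3: "\<forall>x. \<forall>n\<in>CN. \<forall>n'\<in>CN. \<phi> x (n + n') = \<phi> x n + \<phi> x n'"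
    and p4: "\<forall>x. \<forall>b\<in>B. \<forall>n\<in>CN. \<phi> (x * b) n = \<phi> x (lN b n)"
    and p5: "\<forall>a x. \<forall>n\<in>CN. \<phi> (a * x) n = lM a (\<phi> x n)"
    and p6: "\<forall>x. \<forall>n\<in>CN. \<forall>b'\<in>B'. \<phi> x (rN n b') = rM (\<phi> x n) b'"
    and p7: "\<forall>m\<in>CM. \<exists>c. Poly_Mapping.keys c \<subseteq> UNIV \<times> CN \<and> tensor_ind \<phi> c = m"
    and p8: "\<forall>c. Poly_Mapping.keys c \<subseteq> UNIV \<times> CN \<and> tensor_ind \<phi> c = 0 \<longrightarrow> c \<in> tensor_rels B CN lN"
begin

lemma CMsub: "add_subgroup CM" using MM unfolding morita_module_def bimod_def lmod_def by auto
lemma CNsub: "add_subgroup CN" using MN unfolding morita_module_def bimod_def lmod_def by auto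
lemma lM_mem: "m \<in> CM \<Longrightarrow> lM a m \<in> CM" using MM unfolding morita_module_def bimod_def lmod_def by auto
lemma lM_hom: "addhom CM (lM a)" using MM unfolding morita_module_def bimod_def lmod_def addhom_def by auto
lemma rM_mem: "m \<in> CM \<Longrightarrow> rM m a \<in> CM" using MM unfolding morita_module_def bimod_def rmod_def by auto
lemma rM_hom: "addhom CM (\<lambda>m. rM m a)" using MM unfolding morita_module_def bimod_def rmod_def addhom_def by auto
lemma rM_add: "m \<in> CM \<Longrightarrow> rM m (a + b) = rM m a + rM m b" using MM unfolding morita_module_def bimod_def rmod_def by auto
lemma rM_mult: "m \<in> CM \<Longrightarrow> rM m (a * b) = rM (rM m a) b" using MM unfolding morita_module_def bimod_def rmod_def by auto
lemma bM: "m \<in> CM \<Longrightarrow> lM a (rM m b) = rM (lM a m) b" using MM unfolding morita_module_def bimod_def by auto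
lemma MEnd: "llin UNIV CM lM CM lM f \<Longrightarrow> \<exists>!a'. (\<forall>x\<in>CM. f x = rM x a')"
  using MM unfolding morita_module_def by auto

lemma lN_mem: "b \<in> B \<Longrightarrow> n \<in> CN \<Longrightarrow> lN b n \<in> CN" using MN unfolding morita_module_def bimod_def lmod_def by auto
lemma lN_hom: "b \<in> B \<Longrightarrow> addhom CN (lN b)" using MN unfolding morita_module_def bimod_def lmod_def addhom_def by auto
lemma lN_add: "b \<in> B \<Longrightarrow> b2 \<in> B \<Longrightarrow> n \<in> CN \<Longrightarrow> lN (b + b2) n = lN b n + lN b2 n" using MN unfolding morita_module_def bimod_def lmod_def by auto
lemma lN_mult: "b \<in> B \<Longrightarrow> b2 \<in> B \<Longrightarrow> n \<in> CN \<Longrightarrow> lN (b * b2) n = lN b (lN b2 n)" using MN unfolding morita_module_def bimod_def lmod_def by auto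
lemma lN_1: "n \<in> CN \<Longrightarrow> lN 1 n = n" using MN unfolding morita_module_def bimod_def lmod_def by auto
lemma rN_mem: "b \<in> B' \<Longrightarrow> n \<in> CN \<Longrightarrow> rN n b \<in> CN" using MN unfolding morita_module_def bimod_def rmod_def by auto
lemma rN_add: "a \<in> B' \<Longrightarrow> b \<in> B' \<Longrightarrow> n \<in> CN \<Longrightarrow> rN n (a + b) = rN n a + rN n b" using MN unfolding morita_module_def bimod_def rmod_def by auto
lemma NEnd: "llin B CN lN CN lN f \<Longrightarrow> \<exists>!a'. a' \<in> B' \<and> (\<forall>x\<in>CN. f x = rN x a')"
  using MN unfolding morita_module_def by auto

lemma B0: "0 \<in> B" and B1: "1 \<in> B" and Badd: "x \<in> B \<Longrightarrow> y \<in> B \<Longrightarrow> x + y \<in> B"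
  and Bmul: "x \<in> B \<Longrightarrow> y \<in> B \<Longrightarrow> x * y \<in> B" and Bneg: "x \<in> B \<Longrightarrow> - x \<in> B"
  using subB unfolding subring_of_def by auto
lemma Bdiff: "x \<in> B \<Longrightarrow> y \<in> B \<Longrightarrow> x - y \<in> B" using Badd Bneg by (simp only: diff_conv_add_uminus)
lemma B'0: "0 \<in> B'" and B'add: "x \<in> B' \<Longrightarrow> y \<in> B' \<Longrightarrow> x + y \<in> B'"
  and B'mul: "x \<in> B' \<Longrightarrow> y \<in> B' \<Longrightarrow> x * y \<in> B'" and B'neg: "x \<in> B' \<Longrightarrow> - x \<in> B'"
  using subB' unfolding subring_of_def by auto
lemma S0: "0 \<in> S" and Sadd: "x \<in> S \<Longrightarrow> y \<in> S \<Longrightarrow> x + y \<in> S" and Sneg: "x \<in> S \<Longrightarrow> - x \<in> S"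
  using Ssub unfolding add_subgroup_def by auto
lemma Sdiff: "x \<in> S \<Longrightarrow> y \<in> S \<Longrightarrow> x - y \<in> S" using Sadd Sneg by (simp only: diff_conv_add_uminus)

lemma rM_0: "m \<in> CM \<Longrightarrow> rM m 0 = 0" using rM_add[of m 0 0] by simp
lemma rM_diff: "m \<in> CM \<Longrightarrow> rM m (a - b) = rM m a - rM m b"
  using rM_add[of m "a - b" b] by (simp add: eq_diff_eq)
lemma rN_0: "n \<in> CN \<Longrightarrow> rN n 0 = 0" using rN_add[of 0 0 n] B'0 by simp
lemma lM_0: "lM a 0 = 0" using addhom_0[OF CMsub lM_hom] .
lemma lN_0: "n \<in> CN \<Longrightarrow> lN 0 n = 0" using lN_add[of 0 0 n] B0 by simp

lemma phi_0: "n \<in> CN \<Longrightarrow> \<phi> 0 n = 0" using p2 by (metis add_0 add_cancel_right_right)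
lemma phi_hom: "addhom CN (\<phi> x)" using p3 unfolding addhom_def by auto
lemma phi_l: "n \<in> CN \<Longrightarrow> \<phi> x n = lM x (\<phi> 1 n)" using p5 by (metis mult.right_neutral)
lemma phi_B: "b \<in> B \<Longrightarrow> n \<in> CN \<Longrightarrow> \<phi> b n = \<phi> 1 (lN b n)" using p4 by (metis mult_1)

definition piB :: "'a \<Rightarrow> 'a" where "piB a = (SOME b. b \<in> B \<and> a - b \<in> S)"

lemma piB: "piB a \<in> B \<and> a - piB a \<in> S"
proof -
  obtain b s where "b \<in> B" "s \<in> S" "a = b + s" using dec by blast
  then have "\<exists>b. b \<in> B \<and> a - b \<in> S" by auto
  then show ?thesis unfolding piB_def by (rule someI_ex)
qed

lemma piB_unique: "b \<in> B \<Longrightarrow> a - b \<in> S \<Longrightarrow> piB a = b"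
proof -
  assume a: "b \<in> B" "a - b \<in> S"
  have "b - piB a \<in> B" using a piB Bdiff by auto
  moreover have "b - piB a = (a - piB a) - (a - b)" by simp
  then have "b - piB a \<in> S" using a piB Sdiff by metis
  ultimately have "b - piB a = 0" using BiS by blast
  then show ?thesis by simp
qed

lemma piB_S: "s \<in> S \<Longrightarrow> piB s = 0" using piB_unique[of 0 s] B0 by simp
lemma piB_B: "b \<in> B \<Longrightarrow> piB b = b" using piB_unique[of b b] S0 by simp
lemma piB_add: "piB (x + y) = piB x + piB y"
proof -
  have "x + y - (piB x + piB y) = (x - piB x) + (y - piB y)" by (simp add: algebra_simps)
  then show ?thesis using piB_unique[of "piB x + piB y" "x + y"] piB[of x] piB[of y] Badd Sadd
    by metis
qed
lemma mulS: "s \<in> S \<Longrightarrow> x * s \<in> S"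
proof -
  assume s: "s \<in> S"
  have "x * s = piB x * s + (x - piB x) * s" by (simp add: algebra_simps)
  also have "(x - piB x) * s = 0" using SS s piB by auto
  finally show ?thesis using BS piB s by auto
qed
lemma piB_left: "b \<in> B \<Longrightarrow> piB (b * x) = b * piB x"
proof -
  assume b: "b \<in> B"
  have "b * x - b * piB x = b * (x - piB x)" by (simp add: algebra_simps)
  then show ?thesis using piB_unique[of "b * piB x" "b * x"] b piB[of x] Bmul BS by auto
qed
lemma piB_right: "b \<in> B \<Longrightarrow> piB (x * b) = piB x * b"
proof -
  assume b: "b \<in> B"
  have "x * b - piB x * b = (x - piB x) * b" by (simp add: algebra_simps)
  then show ?thesis using piB_unique[of "piB x * b" "x * b"] b piB[of x] Bmul BS by auto
qed

definition \<psi> :: "'a \<Rightarrow> 'n \<Rightarrow> 'n" where "\<psi> x n = lN (piB x) n"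

lemma psi_mem: "n \<in> CN \<Longrightarrow> \<psi> x n \<in> CN" unfolding \<psi>_def using lN_mem piB by auto
lemma psi_rels: "c \<in> tensor_rels B CN lN \<Longrightarrow> tensor_ind \<psi> c = 0"
proof (induction rule: tensor_rels.induct)
  case zero then show ?case by simp
next
  case (add c d) then show ?case by (simp add: ti_add)
next
  case (neg c) then show ?case by (simp add: ti_neg)
next
  case (rel1 n x y) then show ?case
    by (simp add: ti_diff \<psi>_def piB_add lN_add piB)
next
  case (rel2 n n' x) then show ?case
    using lN_hom[of "piB x"] piB unfolding addhom_def by (simp add: ti_diff \<psi>_def)
next
  case (rel3 b n x) then show ?case
    by (simp add: ti_diff \<psi>_def piB_right lN_mult piB)
qed

end


context tsetup begin

lemma phi_mem_ti: "Poly_Mapping.keys c \<subseteq> UNIV \<times> CN \<Longrightarrow> tensor_ind \<phi> c \<in> CM"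
  by (rule ti_mem[OF CMsub]) (use p1 in auto)

lemma keys_diff: "Poly_Mapping.keys (c - d) \<subseteq> Poly_Mapping.keys c \<union> Poly_Mapping.keys (d :: 'x \<Rightarrow>\<^sub>0 int)"
  using keys_add[of c "-d"] keys_uminus'[of d] by (simp only: diff_conv_add_uminus)

definition pr :: "'m \<Rightarrow> 'n" where
  "pr m = tensor_ind \<psi> (SOME c. Poly_Mapping.keys c \<subseteq> UNIV \<times> CN \<and> tensor_ind \<phi> c = m)"

lemma pr_eq: assumes "Poly_Mapping.keys c \<subseteq> UNIV \<times> CN" shows "pr (tensor_ind \<phi> c) = tensor_ind \<psi> c"
proof -
  let ?m = "tensor_ind \<phi> c"
  define c0 where "c0 = (SOME c. Poly_Mapping.keys c \<subseteq> UNIV \<times> CN \<and> tensor_ind \<phi> c = ?m)"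
  have "\<exists>c'. Poly_Mapping.keys c' \<subseteq> UNIV \<times> CN \<and> tensor_ind \<phi> c' = ?m" using assms by blast
  then have c0: "Poly_Mapping.keys c0 \<subseteq> UNIV \<times> CN \<and> tensor_ind \<phi> c0 = ?m"
    unfolding c0_def by (rule someI_ex)
  have "Poly_Mapping.keys (c - c0) \<subseteq> UNIV \<times> CN" using keys_diff[of c c0] c0 assms by auto
  moreover have "tensor_ind \<phi> (c - c0) = 0" using c0 by (simp add: ti_diff)
  ultimately have "c - c0 \<in> tensor_rels B CN lN" using p8 by blast
  then have "tensor_ind \<psi> (c - c0) = 0" by (rule psi_rels)
  then show ?thesis unfolding pr_def c0_def[symmetric] by (simp add: ti_diff)
qed

lemma gen: "m \<in> CM \<Longrightarrow> \<exists>c. Poly_Mapping.keys c \<subseteq> UNIV \<times> CN \<and> tensor_ind \<phi> c = m" using p7 by blast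

lemma pr_mem: "m \<in> CM \<Longrightarrow> pr m \<in> CN"
proof -
  assume "m \<in> CM"
  then obtain c where c: "Poly_Mapping.keys c \<subseteq> UNIV \<times> CN" "tensor_ind \<phi> c = m" using gen by metis
  then have "pr m = tensor_ind \<psi> c" using pr_eq by metis
  also have "\<dots> \<in> CN" by (rule ti_mem[OF CNsub]) (use c psi_mem in auto)
  finally show ?thesis .
qed

lemma pr_add: "m1 \<in> CM \<Longrightarrow> m2 \<in> CM \<Longrightarrow> pr (m1 + m2) = pr m1 + pr m2"
proof -
  assume "m1 \<in> CM" "m2 \<in> CM"
  then obtain c1 c2 where c: "Poly_Mapping.keys c1 \<subseteq> UNIV \<times> CN" "tensor_ind \<phi> c1 = m1"
    "Poly_Mapping.keys c2 \<subseteq> UNIV \<times> CN" "tensor_ind \<phi> c2 = m2" using gen by metis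
  have "Poly_Mapping.keys (c1 + c2) \<subseteq> UNIV \<times> CN" using keys_add[of c1 c2] c by auto
  then have "pr (tensor_ind \<phi> (c1 + c2)) = tensor_ind \<psi> (c1 + c2)" by (rule pr_eq)
  moreover have "pr m1 = tensor_ind \<psi> c1" using pr_eq[OF c(1)] c(2) by simp
  moreover have "pr m2 = tensor_ind \<psi> c2" using pr_eq[OF c(3)] c(4) by simp
  ultimately show ?thesis using c by (simp add: ti_add)
qed

lemma lM_ti: "Poly_Mapping.keys c \<subseteq> UNIV \<times> CN \<Longrightarrow>
   lM a (tensor_ind \<phi> c) = tensor_ind \<phi> (relab (\<lambda>(x, n). (a * x, n)) c)"
proof -
  assume k: "Poly_Mapping.keys c \<subseteq> UNIV \<times> CN"
  have "lM a (tensor_ind \<phi> c) = tensor_ind (\<lambda>x n. lM a (\<phi> x n)) c"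
    by (rule ti_hom[OF CMsub lM_hom]) (use k p1 in auto)
  also have "\<dots> = tensor_ind (\<lambda>x n. \<phi> (a * x) n) c"
    by (rule ti_cong) (use k p5 in auto)
  finally show ?thesis by (simp add: ti_relab)
qed

lemma keys_relab_sub: "Poly_Mapping.keys c \<subseteq> X \<times> CN \<Longrightarrow> (\<And>x n. x \<in> X \<Longrightarrow> n \<in> CN \<Longrightarrow> h (x, n) \<in> Y \<times> CN)
  \<Longrightarrow> Poly_Mapping.keys (relab h c) \<subseteq> Y \<times> CN"
  using keys_relab[of h c] by fastforce

lemma pr_lin: "b \<in> B \<Longrightarrow> m \<in> CM \<Longrightarrow> pr (lM b m) = lN b (pr m)"
proof -
  assume b: "b \<in> B" and "m \<in> CM"
  then obtain c where c: "Poly_Mapping.keys c \<subseteq> UNIV \<times> CN" "tensor_ind \<phi> c = m" using gen by metis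
  have k: "Poly_Mapping.keys (relab (\<lambda>(x, n). (b * x, n)) c) \<subseteq> UNIV \<times> CN"
    by (rule keys_relab_sub[OF c(1)]) auto
  have "pr (lM b m) = tensor_ind \<psi> (relab (\<lambda>(x, n). (b * x, n)) c)"
    using lM_ti[OF c(1)] c(2) pr_eq[OF k] by simp
  also have "\<dots> = tensor_ind (\<lambda>x n. \<psi> (b * x) n) c" by (simp add: ti_relab)
  also have "\<dots> = tensor_ind (\<lambda>x n. lN b (\<psi> x n)) c"
    by (rule ti_cong) (use c b in \<open>auto simp: \<psi>_def piB_left lN_mult piB\<close>)
  also have "\<dots> = lN b (tensor_ind \<psi> c)"
    by (rule ti_hom[OF CNsub lN_hom[OF b], symmetric]) (use c psi_mem in auto)
  finally show ?thesis using pr_eq[OF c(1)] c(2) by simp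
qed

lemma pr_phi1: "n \<in> CN \<Longrightarrow> pr (\<phi> 1 n) = n"
  using pr_eq[of "Poly_Mapping.single (1, n) 1"] by (simp add: \<psi>_def piB_B B1 lN_1)

definition SM :: "'m set" where
  "SM = {tensor_ind \<phi> c | c. Poly_Mapping.keys c \<subseteq> S \<times> CN}"

lemma SM_CM: "m \<in> SM \<Longrightarrow> m \<in> CM" unfolding SM_def using phi_mem_ti by blast

lemma SM_sub: "add_subgroup SM"
  unfolding add_subgroup_def
proof (intro conjI ballI)
  show "0 \<in> SM" unfolding SM_def by (rule CollectI, rule exI[of _ 0]) simp
next
  fix x y assume "x \<in> SM" "y \<in> SM"
  then obtain c d where "Poly_Mapping.keys c \<subseteq> S \<times> CN" "x = tensor_ind \<phi> c"
    "Poly_Mapping.keys d \<subseteq> S \<times> CN" "y = tensor_ind \<phi> d" unfolding SM_def by blast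
  then show "x + y \<in> SM" unfolding SM_def using keys_add[of c d]
    by (intro CollectI exI[of _ "c + d"]) (auto simp: ti_add)
next
  fix x assume "x \<in> SM"
  then obtain c where "Poly_Mapping.keys c \<subseteq> S \<times> CN" "x = tensor_ind \<phi> c" unfolding SM_def by blast
  then show "- x \<in> SM" unfolding SM_def
    by (intro CollectI exI[of _ "- c"]) (auto simp: ti_neg keys_uminus')
qed

lemma SM_relab: "Poly_Mapping.keys c \<subseteq> X \<times> CN \<Longrightarrow> (\<And>x n. x \<in> X \<Longrightarrow> n \<in> CN \<Longrightarrow> h (x, n) \<in> S \<times> CN)
  \<Longrightarrow> tensor_ind \<phi> (relab h c) \<in> SM"
  unfolding SM_def using keys_relab_sub[of c X h S] by blast

lemma SM_lM: "m \<in> SM \<Longrightarrow> lM x m \<in> SM"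
proof -
  assume "m \<in> SM"
  then obtain c where c: "Poly_Mapping.keys c \<subseteq> S \<times> CN" "m = tensor_ind \<phi> c" unfolding SM_def by blast
  then have "lM x m = tensor_ind \<phi> (relab (\<lambda>(y, n). (x * y, n)) c)" using lM_ti[of c x] by auto
  also have "\<dots> \<in> SM" by (rule SM_relab[OF c(1)]) (auto simp: mulS)
  finally show ?thesis .
qed

lemma SM_kill: "s \<in> S \<Longrightarrow> m \<in> SM \<Longrightarrow> lM s m = 0"
proof -
  assume s: "s \<in> S" and "m \<in> SM"
  then obtain c where c: "Poly_Mapping.keys c \<subseteq> S \<times> CN" "m = tensor_ind \<phi> c" unfolding SM_def by blast
  have "lM s m = tensor_ind (\<lambda>x n. lM s (\<phi> x n)) c" unfolding c(2)
    by (rule ti_hom[OF CMsub lM_hom]) (use c p1 in auto)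
  also have "\<dots> = tensor_ind (\<lambda>x n. 0) c"
    by (rule ti_cong) (use c s SS p5 phi_0 in \<open>auto simp flip: p5\<close>)
  finally show ?thesis by (simp add: tensor_ind_def)
qed

lemma SM_rM: "m \<in> SM \<Longrightarrow> b' \<in> B' \<Longrightarrow> rM m b' \<in> SM"
proof -
  assume b: "b' \<in> B'" and "m \<in> SM"
  then obtain c where c: "Poly_Mapping.keys c \<subseteq> S \<times> CN" "m = tensor_ind \<phi> c" unfolding SM_def by blast
  have "rM m b' = tensor_ind (\<lambda>x n. rM (\<phi> x n) b') c" unfolding c(2)
    by (rule ti_hom[OF CMsub rM_hom]) (use c p1 in auto)
  also have "\<dots> = tensor_ind (\<lambda>x n. \<phi> x (rN n b')) c"
    by (rule ti_cong) (use c b p6 in auto)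
  also have "\<dots> = tensor_ind \<phi> (relab (\<lambda>(x, n). (x, rN n b')) c)" by (simp add: ti_relab)
  also have "\<dots> \<in> SM" by (rule SM_relab[OF c(1)]) (auto simp: rN_mem b)
  finally show ?thesis .
qed

lemma SM_pr: "m \<in> SM \<Longrightarrow> pr m = 0"
proof -
  assume "m \<in> SM"
  then obtain c where c: "Poly_Mapping.keys c \<subseteq> S \<times> CN" "m = tensor_ind \<phi> c" unfolding SM_def by blast
  then have "pr m = tensor_ind \<psi> c" using pr_eq by auto
  also have "\<dots> = tensor_ind (\<lambda>x n. 0) c"
    by (rule ti_cong) (use c in \<open>auto simp: \<psi>_def piB_S lN_0\<close>)
  finally show ?thesis by (simp add: tensor_ind_def)
qed

lemma SM_e: "m \<in> CM \<Longrightarrow> m - \<phi> 1 (pr m) \<in> SM"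
proof -
  assume "m \<in> CM"
  then obtain c where c: "Poly_Mapping.keys c \<subseteq> UNIV \<times> CN" "tensor_ind \<phi> c = m" using gen by metis
  have "\<phi> 1 (pr m) = tensor_ind (\<lambda>x n. \<phi> 1 (\<psi> x n)) c"
    unfolding pr_eq[OF c(1), unfolded c(2)]
    by (rule ti_hom[OF CNsub phi_hom]) (use c psi_mem in auto)
  then have "m - \<phi> 1 (pr m) = tensor_ind (\<lambda>x n. \<phi> x n - \<phi> 1 (\<psi> x n)) c"
    using c(2) by (simp add: ti_fdiff)
  also have "\<dots> = tensor_ind (\<lambda>x n. \<phi> (x - piB x) n) c"
  proof (rule ti_cong)
    fix x n assume "(x, n) \<in> Poly_Mapping.keys c"
    then have n: "n \<in> CN" using c by auto
    have "\<phi> x n = \<phi> (piB x) n + \<phi> (x - piB x) n" 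
    proof -
      have "\<phi> (piB x + (x - piB x)) n = \<phi> (piB x) n + \<phi> (x - piB x) n" using p2 n by blast
      then show ?thesis by simp
    qed
    moreover have "\<phi> 1 (\<psi> x n) = \<phi> (piB x) n" unfolding \<psi>_def using phi_B[OF _ n, of "piB x"] piB by simp
    ultimately show "\<phi> x n - \<phi> 1 (\<psi> x n) = \<phi> (x - piB x) n" by simp
  qed
  also have "\<dots> = tensor_ind \<phi> (relab (\<lambda>(x, n). (x - piB x, n)) c)" by (simp add: ti_relab)
  also have "\<dots> \<in> SM" by (rule SM_relab[OF c(1)]) (auto simp: piB)
  finally show ?thesis .
qed

end


context tsetup begin

definition S' :: "'c set" where "S' = {a'. \<forall>n\<in>CN. rM (\<phi> 1 n) a' \<in> SM}"

lemma phi1_mem: "n \<in> CN \<Longrightarrow> \<phi> 1 n \<in> CM" using p1 by auto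

lemma SM0: "0 \<in> SM" and SMadd: "x \<in> SM \<Longrightarrow> y \<in> SM \<Longrightarrow> x + y \<in> SM"
  and SMneg: "x \<in> SM \<Longrightarrow> - x \<in> SM"
  using SM_sub unfolding add_subgroup_def by blast+

lemma rM_neg: "m \<in> CM \<Longrightarrow> rM m (- a) = - rM m a"
  using rM_diff[of m 0 a] rM_0[of m] by simp

lemma S'_sub: "add_subgroup S'"
  unfolding add_subgroup_def
proof (intro conjI ballI)
  show "0 \<in> S'" unfolding S'_def using rM_0[OF phi1_mem] SM0 by simp
next
  fix x y assume "x \<in> S'" "y \<in> S'"
  then show "x + y \<in> S'" unfolding S'_def using rM_add[OF phi1_mem] SMadd by simp
next
  fix x assume "x \<in> S'"
  then show "- x \<in> S'" unfolding S'_def using rM_neg[OF phi1_mem] SMneg by simp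
qed

lemma S'_bimod: "b \<in> B' \<Longrightarrow> s \<in> S' \<Longrightarrow> b * s \<in> S' \<and> s * b \<in> S'"
proof -
  assume b: "b \<in> B'" and s: "s \<in> S'"
  have "rM (\<phi> 1 n) (b * s) \<in> SM" if n: "n \<in> CN" for n
  proof -
    have "rM (\<phi> 1 n) (b * s) = rM (\<phi> 1 (rN n b)) s"
      using rM_mult[OF phi1_mem[OF n]] p6 n b by simp
    then show ?thesis using s rN_mem[OF b n] unfolding S'_def by simp
  qed
  moreover have "rM (\<phi> 1 n) (s * b) \<in> SM" if n: "n \<in> CN" for n
  proof -
    have "rM (\<phi> 1 n) (s * b) = rM (rM (\<phi> 1 n) s) b"
      using rM_mult[OF phi1_mem[OF n]] by simp
    then show ?thesis using s n SM_rM b unfolding S'_def by simp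
  qed
  ultimately show ?thesis unfolding S'_def by blast
qed

lemma zero_rM: "(\<forall>m\<in>CM. rM m a' = 0) \<Longrightarrow> a' = 0"
proof -
  assume z: "\<forall>m\<in>CM. rM m a' = 0"
  have "llin UNIV CM lM CM lM (\<lambda>_. 0)" unfolding llin_def using CMsub lM_0 unfolding add_subgroup_def by auto
  then have u: "\<exists>!a'. (\<forall>x\<in>CM. 0 = rM x a')" using MEnd[of "\<lambda>_. 0"] by simp
  have h1: "\<forall>x\<in>CM. 0 = rM x a'" using z by simp
  have h2: "\<forall>x\<in>CM. 0 = rM x 0" using rM_0 by simp
  show ?thesis using u h1 h2 by blast
qed

lemma zero_rN: "b \<in> B' \<Longrightarrow> (\<forall>n\<in>CN. rN n b = 0) \<Longrightarrow> b = 0"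
proof -
  assume b: "b \<in> B'" and z: "\<forall>n\<in>CN. rN n b = 0"
  have "llin B CN lN CN lN (\<lambda>_. 0)" unfolding llin_def using CNsub lN_hom addhom_0[OF CNsub]
    unfolding add_subgroup_def by auto
  then have u: "\<exists>!a'. a' \<in> B' \<and> (\<forall>x\<in>CN. 0 = rN x a')" using NEnd[of "\<lambda>_. 0"] by simp
  have h1: "b \<in> B' \<and> (\<forall>x\<in>CN. 0 = rN x b)" using z b by simp
  have h2: "0 \<in> B' \<and> (\<forall>x\<in>CN. 0 = rN x 0)" using rN_0 B'0 by simp
  show ?thesis using u h1 h2 by blast
qed

lemma S'S': "s \<in> S' \<Longrightarrow> t \<in> S' \<Longrightarrow> s * t = 0"
proof -
  assume s: "s \<in> S'" and t: "t \<in> S'"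
  have A: "rM m s \<in> SM" if m: "m \<in> CM" for m
  proof -
    obtain c where c: "Poly_Mapping.keys c \<subseteq> UNIV \<times> CN" "tensor_ind \<phi> c = m" using gen m by metis
    have "rM m s = tensor_ind (\<lambda>x n. rM (\<phi> x n) s) c" unfolding c(2)[symmetric]
      by (rule ti_hom[OF CMsub rM_hom]) (use c p1 in auto)
    also have "\<dots> = tensor_ind (\<lambda>x n. lM x (rM (\<phi> 1 n) s)) c"
      by (rule ti_cong) (use c in \<open>auto simp: bM phi1_mem phi_l[symmetric]\<close>)
    also have "\<dots> \<in> SM"
      by (rule ti_mem[OF SM_sub]) (use c s in \<open>auto simp: S'_def intro!: SM_lM\<close>)
    finally show ?thesis .
  qed
  have Z: "rM m t = 0" if m: "m \<in> SM" for m
  proof -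
    obtain c where c: "Poly_Mapping.keys c \<subseteq> S \<times> CN" "tensor_ind \<phi> c = m" using m unfolding SM_def by blast
    have "rM m t = tensor_ind (\<lambda>x n. rM (\<phi> x n) t) c" unfolding c(2)[symmetric]
      by (rule ti_hom[OF CMsub rM_hom]) (use c p1 in auto)
    also have "\<dots> = tensor_ind (\<lambda>x n. 0) c"
    proof (rule ti_cong)
      fix x n assume "(x, n) \<in> Poly_Mapping.keys c"
      then have x: "x \<in> S" and n: "n \<in> CN" using c by auto
      have "rM (\<phi> x n) t = lM x (rM (\<phi> 1 n) t)" using n by (simp add: bM phi1_mem phi_l[symmetric])
      also have "\<dots> = 0" using SM_kill[OF x] t n unfolding S'_def by auto
      finally show "rM (\<phi> x n) t = 0" .
    qed
    finally show ?thesis by (simp add: tensor_ind_def)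
  qed
  have "\<forall>m\<in>CM. rM m (s * t) = 0" using A Z rM_mult by auto
  then show ?thesis by (rule zero_rM)
qed

lemma BS'0: "B' \<inter> S' = {0}"
proof (intro equalityI subsetI)
  fix b assume "b \<in> B' \<inter> S'"
  then have b: "b \<in> B'" and bs: "\<forall>n\<in>CN. rM (\<phi> 1 n) b \<in> SM" unfolding S'_def by auto
  have "\<forall>n\<in>CN. rN n b = 0"
  proof
    fix n assume n: "n \<in> CN"
    have "\<phi> 1 (rN n b) \<in> SM" using bs n b p6 by auto
    then have "pr (\<phi> 1 (rN n b)) = 0" by (rule SM_pr)
    then show "rN n b = 0" using pr_phi1 rN_mem b n by simp
  qed
  then show "b \<in> {0}" using zero_rN b by auto
next
  fix b assume "b \<in> {0::'c}"
  then show "b \<in> B' \<inter> S'" using B'0 S'_sub unfolding add_subgroup_def by auto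
qed

lemma decomp: "\<exists>b\<in>B'. \<exists>s\<in>S'. a = b + s"
proof -
  define h where "h n = pr (rM (\<phi> 1 n) a)" for n
  have "llin B CN lN CN lN h" unfolding llin_def
  proof (intro conjI ballI)
    fix n assume "n \<in> CN" then show "h n \<in> CN" unfolding h_def by (simp add: pr_mem rM_mem phi1_mem)
  next
    fix x y assume xy: "x \<in> CN" "y \<in> CN"
    have "\<phi> 1 (x + y) = \<phi> 1 x + \<phi> 1 y" using p3 xy by auto
    then show "h (x + y) = h x + h y" unfolding h_def
      using rM_hom[of a] xy phi1_mem pr_add rM_mem unfolding addhom_def by auto
  next
    fix b n assume bn: "b \<in> B" "n \<in> CN"
    have "\<phi> 1 (lN b n) = lM b (\<phi> 1 n)" using phi_B[OF bn] phi_l[OF bn(2), of b] by simp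
    then show "h (lN b n) = lN b (h n)" unfolding h_def
      using bn by (simp add: bM[symmetric] phi1_mem pr_lin rM_mem)
  qed
  then obtain b where b: "b \<in> B'" "\<forall>n\<in>CN. h n = rN n b" using NEnd by blast
  have "a - b \<in> S'" unfolding S'_def
  proof (intro CollectI ballI)
    fix n assume n: "n \<in> CN"
    have "rM (\<phi> 1 n) (a - b) = rM (\<phi> 1 n) a - \<phi> 1 (rN n b)" using rM_diff phi1_mem n p6 b by auto
    also have "\<dots> = rM (\<phi> 1 n) a - \<phi> 1 (pr (rM (\<phi> 1 n) a))" using b n unfolding h_def by auto
    also have "\<dots> \<in> SM" by (rule SM_e) (simp add: rM_mem phi1_mem n)
    finally show "rM (\<phi> 1 n) (a - b) \<in> SM" .
  qed
  then show ?thesis using b by force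
qed

lemma main: "trivial_ext B'"
  unfolding trivial_ext_def
proof (intro conjI exI[of _ S'])
  show "subring_of B'" by (rule subB')
  show "add_subgroup S'" by (rule S'_sub)
  show "\<forall>b\<in>B'. \<forall>s\<in>S'. b * s \<in> S' \<and> s * b \<in> S'" using S'_bimod by blast
  show "\<forall>s\<in>S'. \<forall>t\<in>S'. s * t = 0" using S'S' by blast
  show "B' \<inter> S' = {0}" by (rule BS'0)
  show "\<forall>a. \<exists>b\<in>B'. \<exists>s\<in>S'. a = b + s" using decomp by blast
qed

end

theorem proposition3p1:
  fixes B :: "'a::ring_1 set" and B' :: "'c::ring_1 set"
    and CM :: "'m::ab_group_add set" and lM :: "'a \<Rightarrow> 'm \<Rightarrow> 'm" and rM :: "'m \<Rightarrow> 'c \<Rightarrow> 'm"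
    and CN :: "'n::ab_group_add set" and lN :: "'a \<Rightarrow> 'n \<Rightarrow> 'n" and rN :: "'n \<Rightarrow> 'c \<Rightarrow> 'n"
  assumes "trivial_ext B"
    and "morita_equiv_via B B' CM lM rM CN lN rN"
  shows "trivial_ext B'"
proof -
  have sB: "subring_of B" using assms(1) unfolding trivial_ext_def by (rule conjunct1)
  have "\<exists>S. add_subgroup S \<and> (\<forall>b\<in>B. \<forall>s\<in>S. b * s \<in> S \<and> s * b \<in> S) \<and>
     (\<forall>s\<in>S. \<forall>t\<in>S. s * t = 0) \<and> B \<inter> S = {0} \<and> (\<forall>a. \<exists>b\<in>B. \<exists>s\<in>S. a = b + s)"
    using assms(1) unfolding trivial_ext_def by (rule conjunct2)
  then obtain S where S: "add_subgroup S \<and> (\<forall>b\<in>B. \<forall>s\<in>S. b * s \<in> S \<and> s * b \<in> S) \<and>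
     (\<forall>s\<in>S. \<forall>t\<in>S. s * t = 0) \<and> B \<inter> S = {0} \<and> (\<forall>a. \<exists>b\<in>B. \<exists>s\<in>S. a = b + s)"
    by (rule exE)
  from assms(2) have m: "subring_of B'" "morita_module (UNIV :: 'a set) (UNIV :: 'c set) CM lM rM"
    "morita_module B B' CN lN rN" "tensor_iso B CN lN rN B' CM lM rM"
    unfolding morita_equiv_via_def by auto
  from m(4)[unfolded tensor_iso_def] obtain \<phi> :: "'a \<Rightarrow> 'n \<Rightarrow> 'm" where P:
    "(\<forall>x. \<forall>n\<in>CN. \<phi> x n \<in> CM) \<and>
     (\<forall>x y. \<forall>n\<in>CN. \<phi> (x + y) n = \<phi> x n + \<phi> y n) \<and>
     (\<forall>x. \<forall>n\<in>CN. \<forall>n'\<in>CN. \<phi> x (n + n') = \<phi> x n + \<phi> x n') \<and>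
     (\<forall>x. \<forall>b\<in>B. \<forall>n\<in>CN. \<phi> (x * b) n = \<phi> x (lN b n)) \<and>
     (\<forall>a x. \<forall>n\<in>CN. \<phi> (a * x) n = lM a (\<phi> x n)) \<and>
     (\<forall>x. \<forall>n\<in>CN. \<forall>b'\<in>B'. \<phi> x (rN n b') = rM (\<phi> x n) b') \<and>
     (\<forall>m\<in>CM. \<exists>c. Poly_Mapping.keys c \<subseteq> UNIV \<times> CN \<and> tensor_ind \<phi> c = m) \<and>
     (\<forall>c. Poly_Mapping.keys c \<subseteq> UNIV \<times> CN \<and> tensor_ind \<phi> c = 0 \<longrightarrow> c \<in> tensor_rels B CN lN)"
    by (elim exE)
  have T: "tsetup B S B' CM lM rM CN lN rN \<phi>"
    unfolding tsetup_def using S sB m(1,2,3) P by (elim conjE) (intro conjI; assumption)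
  show ?thesis by (rule tsetup.main[OF T])
qed

end
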